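(* Let $\sigma_A>0$, let $A\in\mathbb R^{m\times d}$ have i.i.d. entries $A_{i,j}\sim\mathcal N(0,\sigma_A^2)$, let $b\in\mathbb R^m$, let $\phi(z)=\max\{z,0\}$ be the ReLU applied coordinatewise, and let $f(x)=\phi(Ax+b)$ for $x\in[0,1]^d$. Define the $\ell_1$ global sensitivity \[ \mathrm{GS}_1(f)=\sup\{\|f(x_1)-f(x_2)\|_1 : x_1,x_2\in[0,1]^d \text{ differ in at most one entry}\}. \] Then for any $\delta\in(0,1)$, \[ \Pr_A\Big[\mathrm{GS}_1(f)\le \sigma_A m+4\sigma_A\sqrt m\,\log^{1.5}(md/\delta)\Big]\ge 1-\delta . \]
   Context: $\|v\|_1=\sum_i|v_i|$. The probability is over the random matrix $A$. *)

theory Defs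
  imports "HOL-Probability.Probability"
begin

definition relu_layer :: "('m::finite \<times> 'd::finite \<Rightarrow> real) \<Rightarrow> ('m \<Rightarrow> real) \<Rightarrow> ('d \<Rightarrow> real) \<Rightarrow> 'm \<Rightarrow> real" where
  "relu_layer A b x i = max ((\<Sum>j\<in>UNIV. A (i, j) * x j) + b i) 0"

definition unit_cube :: "('d::finite \<Rightarrow> real) set" where
  "unit_cube = {x. \<forall>j. 0 \<le> x j \<and> x j \<le> 1}"

definition l1_norm :: "('m::finite \<Rightarrow> real) \<Rightarrow> real" where
  "l1_norm v = (\<Sum>i\<in>UNIV. \<bar>v i\<bar>)"

definition GS1 :: "(('d::finite \<Rightarrow> real) \<Rightarrow> ('m::finite \<Rightarrow> real)) \<Rightarrow> real" where
  "GS1 f = Sup {l1_norm (\<lambda>i. f x1 i - f x2 i) | x1 x2.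
      x1 \<in> unit_cube \<and> x2 \<in> unit_cube \<and> card {j. x1 j \<noteq> x2 j} \<le> 1}"

definition gauss_matrix :: "real \<Rightarrow> ('m::finite \<times> 'd::finite \<Rightarrow> real) measure" where
  "gauss_matrix \<sigma> = PiM UNIV (\<lambda>_. density lborel (normal_density 0 \<sigma>))"

end

theory Submission
  imports Defs
begin


lemma exp_le_inv: fixes x :: real assumes "0 \<le> x" "x < 1" shows "exp x \<le> 1 / (1 - x)"
proof -
  have "1 - x \<le> exp (-x)" using exp_ge_add_one_self[of "-x"] by simp
  hence "(1 - x) * exp x \<le> 1" by (simp add: exp_minus field_simps)
  thus ?thesis using assms by (simp add: field_simps)
qed

lemma kappa_le: "sqrt (2 / pi) \<le> 4/5"
proof -
  have h: "2 / pi \<le> (4/5) ^ 2" using pi_approx(1) by (simp add: field_simps)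
  show ?thesis using real_sqrt_le_mono[OF h] by simp
qed

lemma cubic_bound:
  fixes s a :: real assumes "0 \<le> s" "0 < a"
  shows "s^2 - a * s^3 \<le> 4 / (27 * a^2)"
proof -
  have "0 \<le> (3 * (a * s) - 2) ^ 2 * (3 * (a * s) + 1)" using assms by simp
  hence "27 * a^2 * (s^2 - a * s^3) \<le> 4"
    by (simp add: algebra_simps power2_eq_square power3_eq_cube)
  thus ?thesis using assms by (simp add: field_simps)
qed

lemma nd_int1: assumes "\<sigma> > 0" shows "(\<integral>\<^sup>+x. ennreal (normal_density \<mu> \<sigma> x) \<partial>lborel) = 1"
proof -
  interpret prob_space "density lborel (normal_density \<mu> \<sigma>)" using prob_space_normal_density assms by blast
  have "emeasure (density lborel (normal_density \<mu> \<sigma>)) UNIV = 1"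
    using emeasure_space_1 by simp
  thus ?thesis by (simp add: emeasure_density)
qed

lemma nd_mgf:
  assumes "\<sigma> > 0"
  shows "(\<integral>\<^sup>+x. ennreal (normal_density 0 \<sigma> x * exp (l * x)) \<partial>lborel) = ennreal (exp (l^2 * \<sigma>^2 / 2))"
proof -
  have eq: "normal_density 0 \<sigma> x * exp (l * x) = exp (l^2 * \<sigma>^2 / 2) * normal_density (l * \<sigma>^2) \<sigma> x" for x
  proof -
    have "- ((x - 0) ^ 2) / (2 * \<sigma>^2) + l * x = l^2 * \<sigma>^2 / 2 + (- ((x - l * \<sigma>^2) ^ 2) / (2 * \<sigma>^2))"
      using assms by (simp add: field_simps power2_eq_square)
    hence "exp (- ((x - 0) ^ 2) / (2 * \<sigma>^2)) * exp (l * x) = exp (l^2 * \<sigma>^2 / 2) * exp (- ((x - l * \<sigma>^2) ^ 2) / (2 * \<sigma>^2))"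
      by (metis exp_add)
    thus ?thesis unfolding normal_density_def by (simp add: mult_ac)
  qed
  have "(\<integral>\<^sup>+x. ennreal (normal_density 0 \<sigma> x * exp (l * x)) \<partial>lborel)
      = (\<integral>\<^sup>+x. ennreal (exp (l^2 * \<sigma>^2 / 2)) * ennreal (normal_density (l * \<sigma>^2) \<sigma> x) \<partial>lborel)"
    by (simp add: eq ennreal_mult normal_density_nonneg)
  also have "\<dots> = ennreal (exp (l^2 * \<sigma>^2 / 2))"
    by (subst nn_integral_cmult) (auto simp: nd_int1 assms)
  finally show ?thesis .
qed

lemma nd_abs:
  assumes "\<sigma> > 0"
  shows "(\<integral>\<^sup>+x. ennreal (normal_density 0 \<sigma> x * \<bar>x\<bar>) \<partial>lborel) = ennreal (\<sigma> * sqrt (2 / pi))"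
proof -
  have "has_bochner_integral lborel (\<lambda>x. normal_density 0 \<sigma> x * \<bar>x - 0\<bar>^(2 * 0 + 1)) (2^0 * \<sigma>^(2 * 0 + 1) * fact 0 * sqrt (2 / pi))"
    using normal_moment_abs_odd[of \<sigma> 0 0] assms by blast
  hence h: "has_bochner_integral lborel (\<lambda>x. normal_density 0 \<sigma> x * \<bar>x\<bar>) (\<sigma> * sqrt (2 / pi))" by simp
  show ?thesis
    using nn_integral_eq_integral[OF conjunct1[OF h[unfolded has_bochner_integral_iff]]] h[unfolded has_bochner_integral_iff]
    by (simp add: normal_density_nonneg)
qed



lemma nd_absmgf:
  assumes "\<sigma> > 0" "l \<ge> 0"
  shows "(\<integral>\<^sup>+x. ennreal (exp (l * \<bar>x\<bar>)) \<partial>(density lborel (normal_density 0 \<sigma>)))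
     \<le> ennreal (2 * exp (l^2 * \<sigma>^2 / 2) - 1 + l * (\<sigma> * sqrt (2 / pi)))"
proof -
  let ?nd = "normal_density 0 \<sigma>"
  have dens: "(\<integral>\<^sup>+x. ennreal (exp (l * \<bar>x\<bar>)) \<partial>(density lborel ?nd))
      = (\<integral>\<^sup>+x. ennreal (?nd x * exp (l * \<bar>x\<bar>)) \<partial>lborel)"
    by (subst nn_integral_density) (auto simp: ennreal_mult normal_density_nonneg)
  have pw: "ennreal (?nd x * exp (l * \<bar>x\<bar>)) + ennreal (?nd x)
      \<le> ennreal (?nd x * exp (l * x)) + ennreal (?nd x * exp ((-l) * x)) + ennreal l * ennreal (?nd x * \<bar>x\<bar>)" for x
  proof -
    have a: "exp (l * \<bar>x\<bar>) + 1 \<le> exp (l * x) + exp ((-l) * x) + l * \<bar>x\<bar>"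
    proof -
      have "1 \<le> exp (- (l * \<bar>x\<bar>)) + l * \<bar>x\<bar>" using exp_ge_add_one_self[of "- (l * \<bar>x\<bar>)"] by simp
      moreover have "exp (l * x) + exp ((-l) * x) = exp (l * \<bar>x\<bar>) + exp (- (l * \<bar>x\<bar>))"
        by (cases "x \<ge> 0") auto
      ultimately show ?thesis by linarith
    qed
    have n: "0 \<le> ?nd x" by (rule normal_density_nonneg)
    have "?nd x * exp (l * \<bar>x\<bar>) + ?nd x \<le> ?nd x * exp (l * x) + ?nd x * exp ((-l) * x) + l * (?nd x * \<bar>x\<bar>)"
      using mult_left_mono[OF a n] by (simp add: algebra_simps)
    thus ?thesis using n assms
      by (simp add: ennreal_mult[symmetric] ennreal_plus[symmetric] del: ennreal_plus)
  qed
  have "(\<integral>\<^sup>+x. ennreal (?nd x * exp (l * \<bar>x\<bar>)) \<partial>lborel) + 1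
      = (\<integral>\<^sup>+x. ennreal (?nd x * exp (l * \<bar>x\<bar>)) + ennreal (?nd x) \<partial>lborel)"
    by (subst nn_integral_add) (auto simp: nd_int1 assms)
  also have "\<dots> \<le> (\<integral>\<^sup>+x. ennreal (?nd x * exp (l * x)) + ennreal (?nd x * exp ((-l) * x)) + ennreal l * ennreal (?nd x * \<bar>x\<bar>) \<partial>lborel)"
    by (rule nn_integral_mono) (rule pw)
  also have "\<dots> = ennreal (exp (l^2 * \<sigma>^2 / 2)) + ennreal (exp ((-l)^2 * \<sigma>^2 / 2)) + ennreal l * ennreal (\<sigma> * sqrt (2 / pi))"
    using nd_mgf[OF assms(1), of "-l"] by (simp add: nn_integral_add nn_integral_cmult nd_mgf nd_abs assms)
  also have "\<dots> = ennreal (2 * exp (l^2 * \<sigma>^2 / 2) + l * (\<sigma> * sqrt (2 / pi)))"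
    using assms by (simp add: ennreal_mult[symmetric] ennreal_plus[symmetric] del: ennreal_plus)
  finally have le: "(\<integral>\<^sup>+x. ennreal (?nd x * exp (l * \<bar>x\<bar>)) \<partial>lborel) + 1
      \<le> ennreal (2 * exp (l^2 * \<sigma>^2 / 2) + l * (\<sigma> * sqrt (2 / pi)))" .
  obtain r where r: "(\<integral>\<^sup>+x. ennreal (?nd x * exp (l * \<bar>x\<bar>)) \<partial>lborel) = ennreal r" "0 \<le> r"
    using le by (cases "(\<integral>\<^sup>+x. ennreal (?nd x * exp (l * \<bar>x\<bar>)) \<partial>lborel)") (auto simp: top_add top_unique)
  have "ennreal (r + 1) \<le> ennreal (2 * exp (l^2 * \<sigma>^2 / 2) + l * (\<sigma> * sqrt (2 / pi)))"
    using le r by (subst ennreal_plus) auto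
  hence "r + 1 \<le> 2 * exp (l^2 * \<sigma>^2 / 2) + l * (\<sigma> * sqrt (2 / pi))"
    using assms by (subst (asm) ennreal_le_iff) (auto intro!: add_nonneg_nonneg)
  thus ?thesis using dens r by simp
qed

lemma markov_g:
  fixes S :: "'a \<Rightarrow> real" and g :: "real \<Rightarrow> real"
  assumes M: "prob_space M" and S: "S \<in> borel_measurable M"
    and gm: "(\<lambda>x. g (S x)) \<in> borel_measurable M"
    and gT: "0 < g T" and mono: "\<And>x. T \<le> x \<Longrightarrow> g T \<le> g x" and nn: "\<And>x. 0 \<le> g x"
    and I: "(\<integral>\<^sup>+x. ennreal (g (S x)) \<partial>M) \<le> ennreal B" and B: "0 \<le> B"
  shows "measure M {x\<in>space M. T \<le> S x} \<le> B / g T"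
proof -
  interpret prob_space M by (rule M)
  let ?E = "{x\<in>space M. T \<le> S x}"
  have "?E = S -` {T..} \<inter> space M" by auto
  also have "\<dots> \<in> sets M" by (rule measurable_sets[OF S]) (intro borel_closed closed_atLeast)
  finally have E: "?E \<in> sets M" .
  have "ennreal (g T) * emeasure M ?E = (\<integral>\<^sup>+x. ennreal (g T) * indicator ?E x \<partial>M)"
    using E by (simp add: nn_integral_cmult_indicator)
  also have "\<dots> \<le> (\<integral>\<^sup>+x. ennreal (g (S x)) \<partial>M)"
    by (rule nn_integral_mono) (auto simp: indicator_def mono ennreal_leI)
  also have "\<dots> \<le> ennreal B" by (rule I)
  finally have "ennreal (g T * measure M ?E) \<le> ennreal B"
    using gT by (simp add: emeasure_eq_measure ennreal_mult)
  hence "g T * measure M ?E \<le> B" using B by (simp add: ennreal_le_iff)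
  thus ?thesis using gT by (simp add: field_simps mult.commute)
qed



lemma pps: assumes "\<sigma> > 0" shows "product_prob_space (\<lambda>_::'i. density lborel (normal_density 0 \<sigma>))"
proof -
  have p: "prob_space (density lborel (normal_density 0 \<sigma>))" using prob_space_normal_density assms by blast
  show ?thesis
    unfolding product_prob_space_def product_prob_space_axioms_def product_sigma_finite_def
    using p by (auto intro: prob_space_imp_sigma_finite)
qed

lemma prob_gm: assumes "\<sigma> > 0" shows "prob_space (gauss_matrix \<sigma> :: ('m::finite \<times> 'd::finite \<Rightarrow> real) measure)"
proof -
  interpret product_prob_space "\<lambda>_::'m\<times>'d. density lborel (normal_density 0 \<sigma>)" using pps[OF assms] .
  show ?thesis unfolding gauss_matrix_def by (rule prob_space_PiM) (rule M.prob_space_axioms)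
qed

lemma sets_gm: "sets (gauss_matrix \<sigma> :: ('m::finite \<times> 'd::finite \<Rightarrow> real) measure) = sets borel"
proof -
  have "sets (gauss_matrix \<sigma> :: ('m \<times> 'd \<Rightarrow> real) measure) = sets (PiM UNIV (\<lambda>_::'m\<times>'d. borel :: real measure))"
    unfolding gauss_matrix_def by (rule sets_PiM_cong) auto
  also have "\<dots> = sets borel" by (rule sets_PiM_equal_borel)
  finally show ?thesis .
qed

lemma space_gm: "space (gauss_matrix \<sigma> :: ('m::finite \<times> 'd::finite \<Rightarrow> real) measure) = UNIV"
  unfolding gauss_matrix_def by (simp add: space_PiM)

lemma nd_space1: assumes "\<sigma> > 0" shows "emeasure (density lborel (\<lambda>x. ennreal (normal_density 0 \<sigma> x))) UNIV = 1"
proof -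
  interpret prob_space "density lborel (normal_density 0 \<sigma>)" using prob_space_normal_density assms by blast
  show ?thesis using emeasure_space_1 by simp
qed

lemma prod_int:
  assumes "\<sigma> > 0" and f: "f \<in> borel_measurable borel"
  shows "(\<integral>\<^sup>+A. (\<Prod>k\<in>UNIV. if P k then f (A k) else 1) \<partial>(gauss_matrix \<sigma> :: ('m::finite \<times> 'd::finite \<Rightarrow> real) measure))
     = (\<integral>\<^sup>+x. f x \<partial>density lborel (normal_density 0 \<sigma>)) ^ card {k::'m\<times>'d. P k}"
proof -
  interpret product_prob_space "\<lambda>_::'m\<times>'d. density lborel (normal_density 0 \<sigma>)" using pps[OF assms(1)] .
  have fm: "(\<lambda>x. if P k then f x else 1) \<in> borel_measurable borel" for k by (cases "P k") (auto simp: f)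
  have "(\<integral>\<^sup>+A. (\<Prod>k\<in>UNIV. if P k then f (A k) else 1) \<partial>(gauss_matrix \<sigma> :: ('m \<times> 'd \<Rightarrow> real) measure))
     = (\<Prod>k\<in>UNIV. integral\<^sup>N (density lborel (normal_density 0 \<sigma>)) (\<lambda>x. if P k then f x else 1))"
    unfolding gauss_matrix_def
    using product_nn_integral_prod[of UNIV "\<lambda>k x. if P k then f x else 1"] fm by simp
  also have "\<dots> = (\<Prod>k\<in>UNIV. if P k then (\<integral>\<^sup>+x. f x \<partial>density lborel (normal_density 0 \<sigma>)) else 1)"
    by (rule prod.cong) (auto simp: nd_space1 assms)
  also have "\<dots> = (\<integral>\<^sup>+x. f x \<partial>density lborel (normal_density 0 \<sigma>)) ^ card {k::'m\<times>'d. P k}"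
    by (simp add: prod.If_cases)
  finally show ?thesis .
qed



lemma prod_snd:
  fixes h :: "'m::finite \<times> 'd::finite \<Rightarrow> 'c::comm_monoid_mult"
  shows "(\<Prod>k\<in>UNIV. if snd k = j then h k else 1) = (\<Prod>i\<in>UNIV. h (i,j))"
proof -
  have "(\<Prod>k\<in>UNIV. if snd k = j then h k else 1) = (\<Prod>k\<in>(UNIV::'m set) \<times> (UNIV::'d set). if snd k = j then h k else 1)"
    by simp
  also have "\<dots> = (\<Prod>i\<in>UNIV. \<Prod>j'\<in>UNIV. if j' = j then h (i,j') else 1)"
    by (subst prod.cartesian_product) (rule prod.cong, auto)
  also have "\<dots> = (\<Prod>i\<in>UNIV. h (i,j))" by simp
  finally show ?thesis .
qed

lemma card_snd: "card {k::'m::finite \<times> 'd::finite. snd k = j} = CARD('m)"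
proof -
  have "{k::'m \<times> 'd. snd k = j} = UNIV \<times> {j}" by auto
  thus ?thesis by (simp add: card_cartesian_product)
qed

lemma col_mgf:
  assumes "\<sigma> > 0" "l \<ge> 0"
  shows "(\<integral>\<^sup>+A. ennreal (exp (l * (\<Sum>i\<in>UNIV. \<bar>A (i,j)\<bar>))) \<partial>(gauss_matrix \<sigma> :: ('m::finite \<times> 'd::finite \<Rightarrow> real) measure))
     \<le> ennreal ((2 * exp (l^2 * \<sigma>^2 / 2) - 1 + l * (\<sigma> * sqrt (2 / pi))) ^ CARD('m))"
proof -
  let ?M = "2 * exp (l^2 * \<sigma>^2 / 2) - 1 + l * (\<sigma> * sqrt (2 / pi))"
  have eq: "ennreal (exp (l * (\<Sum>i\<in>UNIV. \<bar>A (i,j)\<bar>))) = (\<Prod>k\<in>UNIV. if snd k = j then ennreal (exp (l * \<bar>A k\<bar>)) else 1)"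
    for A :: "'m \<times> 'd \<Rightarrow> real"
    by (simp add: prod_snd sum_distrib_left exp_sum prod_ennreal)
  have fm: "(\<lambda>x. ennreal (exp (l * \<bar>x\<bar>))) \<in> borel_measurable borel" by measurable
  have "(\<integral>\<^sup>+A. ennreal (exp (l * (\<Sum>i\<in>UNIV. \<bar>A (i,j)\<bar>))) \<partial>(gauss_matrix \<sigma> :: ('m \<times> 'd \<Rightarrow> real) measure))
      = (\<integral>\<^sup>+x. ennreal (exp (l * \<bar>x\<bar>)) \<partial>density lborel (normal_density 0 \<sigma>)) ^ CARD('m)"
    unfolding eq
    by (rule trans[OF prod_int[OF assms(1) fm, of "\<lambda>k. snd k = j"]]) (simp add: card_snd)
  also have "\<dots> \<le> ennreal ?M ^ CARD('m)"
    by (rule power_mono) (use nd_absmgf[OF assms] in auto)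
  also have "\<dots> = ennreal (?M ^ CARD('m))"
  proof -
    have "1 \<le> exp (l^2 * \<sigma>^2 / 2)" by simp
    moreover have "0 \<le> l * (\<sigma> * sqrt (2 / pi))" using assms by simp
    ultimately have "0 \<le> ?M" by linarith
    thus ?thesis by (simp add: ennreal_power)
  qed
  finally show ?thesis .
qed

lemma col_mean:
  assumes "\<sigma> > 0"
  shows "(\<integral>\<^sup>+A. ennreal (\<Sum>i\<in>UNIV. \<bar>A (i,j)\<bar>) \<partial>(gauss_matrix \<sigma> :: ('m::finite \<times> 'd::finite \<Rightarrow> real) measure))
     = ennreal (CARD('m) * (\<sigma> * sqrt (2 / pi)))"
proof -
  have one: "(\<integral>\<^sup>+A. ennreal \<bar>A (i,j)\<bar> \<partial>(gauss_matrix \<sigma> :: ('m \<times> 'd \<Rightarrow> real) measure)) = ennreal (\<sigma> * sqrt (2 / pi))" for i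
  proof -
    have fm: "(\<lambda>x::real. ennreal \<bar>x\<bar>) \<in> borel_measurable borel" by measurable
    have eq: "ennreal \<bar>A (i,j)\<bar> = (\<Prod>k\<in>UNIV. if k = (i,j) then ennreal \<bar>A k\<bar> else 1)" for A :: "'m \<times> 'd \<Rightarrow> real"
      by simp
    have "(\<integral>\<^sup>+A. ennreal \<bar>A (i,j)\<bar> \<partial>(gauss_matrix \<sigma> :: ('m \<times> 'd \<Rightarrow> real) measure))
        = (\<integral>\<^sup>+x. ennreal \<bar>x\<bar> \<partial>density lborel (normal_density 0 \<sigma>)) ^ card {k::'m\<times>'d. k = (i,j)}"
      unfolding eq
      by (rule trans[OF prod_int[OF assms(1) fm, of "\<lambda>k. k = (i,j)"]]) simp
    also have "\<dots> = (\<integral>\<^sup>+x. ennreal (normal_density 0 \<sigma> x * \<bar>x\<bar>) \<partial>lborel)"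
      by (subst nn_integral_density) (auto simp: ennreal_mult normal_density_nonneg)
    also have "\<dots> = ennreal (\<sigma> * sqrt (2 / pi))" by (rule nd_abs[OF assms])
    finally show ?thesis .
  qed
  have "(\<integral>\<^sup>+A. ennreal (\<Sum>i\<in>UNIV. \<bar>A (i,j)\<bar>) \<partial>(gauss_matrix \<sigma> :: ('m \<times> 'd \<Rightarrow> real) measure))
     = (\<integral>\<^sup>+A. (\<Sum>i\<in>UNIV. ennreal \<bar>A (i,j)\<bar>) \<partial>(gauss_matrix \<sigma> :: ('m \<times> 'd \<Rightarrow> real) measure))"
    by (simp add: sum_ennreal)
  also have "\<dots> = (\<Sum>i\<in>UNIV. (\<integral>\<^sup>+A. ennreal \<bar>A (i,j)\<bar> \<partial>(gauss_matrix \<sigma> :: ('m \<times> 'd \<Rightarrow> real) measure)))"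
    by (rule nn_integral_sum) (simp add: gauss_matrix_def)
  also have "\<dots> = ennreal (CARD('m) * (\<sigma> * sqrt (2 / pi)))"
    using assms by (simp add: one ennreal_of_nat_eq_real_of_nat ennreal_mult)
  finally show ?thesis .
qed



lemma tail_core:
  fixes m d :: nat and \<sigma> \<delta> P :: real
  assumes m: "m \<ge> 1" and d: "d \<ge> 1" and \<sigma>: "\<sigma> > 0" and \<delta>: "0 < \<delta>" "\<delta> < 1"
    and H1: "\<And>l. l \<ge> 0 \<Longrightarrow> P \<le> (2 * exp (l^2 * \<sigma>^2 / 2) - 1 + l * (\<sigma> * sqrt (2 / pi))) ^ m
               / exp (l * (\<sigma> * real m + 4 * \<sigma> * sqrt (real m) * ln (real m * real d / \<delta>) powr (3/2)))"
    and H2: "P \<le> real m * (\<sigma> * sqrt (2 / pi)) / (\<sigma> * real m + 4 * \<sigma> * sqrt (real m) * ln (real m * real d / \<delta>) powr (3/2))"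
  shows "P \<le> \<delta> / real d"
proof -
  define L where "L = ln (real m * real d / \<delta>)"
  define s where "s = sqrt L"
  define \<kappa> where "\<kappa> = sqrt (2 / pi)"
  have \<kappa>: "0 \<le> \<kappa>" "\<kappa> \<le> 4/5" using kappa_le by (auto simp: \<kappa>_def)
  have md: "real m * real d / \<delta> > 1"
  proof -
    have a: "1 \<le> real m" "1 \<le> real d" using m d by auto
    have "real m * real d \<ge> 1" using mult_mono[OF a(1) a(2)] by simp
    thus ?thesis using \<delta> by (simp add: field_simps)
  qed
  have L: "L > 0" unfolding L_def using md by simp
  have s: "s \<ge> 0" "s^2 = L" using L by (auto simp: s_def)
  have Lp: "L powr (3/2) = L * s"
  proof -
    have "L powr (3/2) = L powr (1 + 1/2)" by simp
    also have "\<dots> = L powr 1 * L powr (1/2)" by (rule powr_add)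
    also have "\<dots> = L * s" using L by (simp add: s_def powr_half_sqrt)
    finally show ?thesis .
  qed
  have expL: "exp L = real m * real d / \<delta>" unfolding L_def using md by simp
  have target: "real m * exp (- L) = \<delta> / real d"
    using expL m d \<delta> by (simp add: exp_minus field_simps)
  define T where "T = \<sigma> * real m + 4 * \<sigma> * sqrt (real m) * (L * s)"
  have H1': "\<And>l. l \<ge> 0 \<Longrightarrow> P \<le> (2 * exp (l^2 * \<sigma>^2 / 2) - 1 + l * (\<sigma> * \<kappa>)) ^ m / exp (l * T)"
    using H1 unfolding T_def L_def[symmetric] Lp \<kappa>_def .
  have H2': "P \<le> real m * (\<sigma> * \<kappa>) / T"
    using H2 unfolding T_def L_def[symmetric] Lp \<kappa>_def .
  show ?thesis
  proof (cases "m \<ge> 2")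
    case True
    define l where "l = 3 / (20 * \<sigma>)"
    have l0: "l \<ge> 0" using \<sigma> by (simp add: l_def)
    have M: "2 * exp (l^2 * \<sigma>^2 / 2) - 1 + l * (\<sigma> * \<kappa>) \<le> exp (3/20)"
    proof -
      have e1: "l^2 * \<sigma>^2 / 2 = 9/800" using \<sigma> by (simp add: l_def power2_eq_square field_simps)
      have e2: "exp (9/800::real) \<le> 800/791" using exp_le_inv[of "9/800"] by simp
      have e3: "l * (\<sigma> * \<kappa>) \<le> 3/25" using \<sigma> \<kappa> by (simp add: l_def field_simps)
      have e4: "1 + 3/20 \<le> exp (3/20::real)" using exp_ge_add_one_self[of "3/20"] by simp
      show ?thesis unfolding e1 using e2 e3 e4 by linarith
    qed
    have M0: "0 \<le> 2 * exp (l^2 * \<sigma>^2 / 2) - 1 + l * (\<sigma> * \<kappa>)"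
    proof -
      have "1 \<le> exp (l^2 * \<sigma>^2 / 2)" by simp
      moreover have "0 \<le> l * (\<sigma> * \<kappa>)" using l0 \<sigma> \<kappa> by simp
      ultimately show ?thesis by linarith
    qed
    have "P \<le> exp (3/20) ^ m / exp (l * T)"
      using H1'[OF l0] power_mono[OF M M0, of m] by (smt (verit) divide_right_mono exp_gt_zero)
    also have "exp (3/20) ^ m / exp (l * T) = exp (- (3/5 * sqrt (real m) * (L * s)))"
    proof -
      have "l * T = 3/20 * real m + 3/5 * sqrt (real m) * (L * s)"
        using \<sigma> by (simp add: l_def T_def field_simps)
      moreover have "exp (3/20) ^ m = exp (3/20 * real m)" by (simp add: exp_of_nat_mult[symmetric] mult.commute)
      ultimately show ?thesis by (simp add: exp_diff[symmetric])
    qed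
    also have "\<dots> \<le> real m * exp (- L)"
    proof -
      define a where "a = 3/5 * sqrt (real m)"
      have a: "a > 0" using m by (simp add: a_def)
      have "s^2 - a * s^3 \<le> 4 / (27 * a^2)" by (rule cubic_bound[OF s(1) a])
      also have "\<dots> = 100 / (243 * real m)"
      proof -
        have "a^2 = 9/25 * real m" by (simp add: a_def power_mult_distrib power_divide)
        hence h: "27 * a^2 = 243/25 * real m" by simp
        show ?thesis unfolding h by (simp add: field_simps)
      qed
      also have "\<dots> \<le> 50 / 243" using True by (simp add: field_simps)
      also have "\<dots> \<le> ln 2"
      proof -
        have "exp (50/243::real) \<le> 243/193" using exp_le_inv[of "50/243"] by simp
        hence "exp (50/243::real) \<le> 2" by simp
        thus ?thesis by (metis exp_le_cancel_iff exp_ln zero_less_numeral)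
      qed
      also have "\<dots> \<le> ln (real m)" using True by simp
      finally have "L - a * (L * s) \<le> ln (real m)" using s by (simp add: power3_eq_cube power2_eq_square algebra_simps)
      hence "exp (L - a * (L * s)) \<le> real m" using m by (metis exp_le_cancel_iff exp_ln of_nat_0_less_iff less_le_trans zero_less_one)
      hence "exp (- (a * (L * s))) \<le> real m * exp (- L)" by (simp add: exp_diff exp_minus field_simps)
      thus ?thesis by (simp add: a_def)
    qed
    finally show ?thesis using target by simp
  next
    case False
    hence m1: "m = 1" using m by simp
    show ?thesis
    proof (cases "L \<le> 1")
      case True
      have T1: "T = \<sigma> * (1 + 4 * (L * s))" using m1 by (simp add: T_def algebra_simps)
      have Tpos: "1 + 4 * (L * s) > 0" using L s by (simp add: add_pos_nonneg)
      have key: "\<kappa> * exp L \<le> 1 + 4 * (L * s)"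
      proof (cases "L \<le> 1/2")
        case True
        have "exp L \<le> 1 / (1 - L)" using exp_le_inv[of L] L True by simp
        hence e: "exp L * (1 - L) \<le> 1" using True by (simp add: field_simps)
        have "4/5 \<le> (1 - s^2) * (1 + 4 * s^3)"
        proof -
          have s2: "s^2 \<le> 1/2" using s True by simp
          consider "s \<le> 2/5" | "2/5 \<le> s \<and> s \<le> 3/5" | "3/5 \<le> s" by linarith
          thus ?thesis
          proof cases
            case 1
            have "s^2 \<le> (2/5)^2" using 1 s by (intro power_mono) auto
            moreover have "0 \<le> s^3" using s by simp
            ultimately have "(1 - s^2) * 1 \<le> (1 - s^2) * (1 + 4 * s^3)" by (intro mult_left_mono) (auto simp: power2_eq_square)
            hence "1 - s^2 \<le> (1 - s^2) * (1 + 4 * s^3)" by simp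
            moreover have "s^2 \<le> 4/25" using \<open>s^2 \<le> (2/5)^2\<close> by (simp add: power2_eq_square)
            ultimately show ?thesis by linarith
          next
            case 2
            have "s^2 \<le> (3/5)^2" using 2 s by (intro power_mono) auto
            moreover have "(2/5)^3 \<le> s^3" using 2 by (intro power_mono) auto
            ultimately have "(16/25) * (157/125) \<le> (1 - s^2) * (1 + 4 * s^3)" by (intro mult_mono) (auto simp: power2_eq_square power3_eq_cube)
            thus ?thesis by simp
          next
            case 3
            have "(3/5)^3 \<le> s^3" using 3 by (intro power_mono) auto
            hence "(1/2) * (233/125) \<le> (1 - s^2) * (1 + 4 * s^3)" using s2 by (intro mult_mono) (auto simp: power2_eq_square power3_eq_cube)
            thus ?thesis by simp
          qed
        qed
        moreover have "(1 - L) * (1 + 4 * (L * s)) = (1 - s^2) * (1 + 4 * s^3)"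
          by (simp add: s(2)[symmetric] power3_eq_cube power2_eq_square algebra_simps)
        ultimately have "4/5 \<le> (1 - L) * (1 + 4 * (L * s))" by simp
        note h45 = this
        have k1: "\<kappa> * (exp L * (1 - L)) \<le> \<kappa> * 1" by (rule mult_left_mono[OF e \<kappa>(1)])
        have eqa: "\<kappa> * exp L * (1 - L) = \<kappa> * (exp L * (1 - L))" by (simp add: mult.assoc)
        have eqb: "(1 + 4 * (L * s)) * (1 - L) = (1 - L) * (1 + 4 * (L * s))" by (rule mult.commute)
        have "\<kappa> * exp L * (1 - L) \<le> (1 + 4 * (L * s)) * (1 - L)"
          using k1 eqa eqb h45 \<kappa>(2) by linarith
        moreover have "0 < 1 - L" using True by simp
        ultimately show ?thesis by (simp only: mult_le_cancel_right_pos)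
      next
        case False
        have "exp L \<le> exp 1" using \<open>L \<le> 1\<close> by simp
        also have "\<dots> \<le> 272/100" using e_less_272 by simp
        finally have e: "exp L \<le> 272/100" .
        have "(7/10)^2 \<le> s^2" using s False by (simp add: power2_eq_square)
        hence "sqrt ((7/10)^2) \<le> sqrt L" using s by (intro real_sqrt_le_mono) simp
        hence "7/10 \<le> s" by (simp add: s_def)
        hence "1/2 * (7/10) \<le> L * s" using False s by (intro mult_mono) auto
        moreover have "\<kappa> * exp L \<le> 4/5 * (272/100)" using \<kappa> e by (intro mult_mono) auto
        ultimately show ?thesis by simp
      qed
      have "P \<le> \<sigma> * \<kappa> / (\<sigma> * (1 + 4 * (L * s)))" using H2' m1 T1 by simp
      also have "\<dots> = \<kappa> / (1 + 4 * (L * s))" using \<sigma> by simp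
      also have "\<dots> \<le> exp (- L)" using key Tpos by (simp add: exp_minus field_simps)
      finally show ?thesis using target m1 by simp
    next
      case False
      define l where "l = 1 / \<sigma>"
      have l0: "l \<ge> 0" using \<sigma> by (simp add: l_def)
      have lT: "l * T = 1 + 4 * (L * s)" using \<sigma> m1 by (simp add: l_def T_def field_simps)
      have e1: "l^2 * \<sigma>^2 / 2 = 1/2" using \<sigma> by (simp add: l_def power2_eq_square)
      have e3: "l * (\<sigma> * \<kappa>) \<le> 1" using \<sigma> \<kappa> by (simp add: l_def)
      have s1: "s \<ge> 1" using False s by (simp add: s_def)
      have "P \<le> (2 * exp (1/2) - 1 + l * (\<sigma> * \<kappa>)) / exp (1 + 4 * (L * s))"
        using H1'[OF l0] m1 lT e1 by simp
      also have "\<dots> \<le> (2 * exp (1/2)) / exp (1 + 4 * L)"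
      proof (rule frac_le)
        show "0 \<le> 2 * exp (1/2::real)" by simp
        show "2 * exp (1/2) - 1 + l * (\<sigma> * \<kappa>) \<le> 2 * exp (1/2)" using e3 by simp
        show "0 < exp (1 + 4 * L)" by simp
        show "exp (1 + 4 * L) \<le> exp (1 + 4 * (L * s))" using s1 L by simp
      qed
      also have "\<dots> \<le> exp (- L)"
      proof -
        have "2 \<le> exp (1/2 + 3 * L)" using exp_ge_add_one_self[of "1/2 + 3 * L"] False by simp
        hence "2 * exp (1/2) * exp L \<le> exp (1/2 + 3 * L) * exp (1/2) * exp L" by simp
        also have "\<dots> = exp (1 + 4 * L)" by (simp add: exp_add[symmetric])
        finally show ?thesis by (simp add: exp_minus field_simps)
      qed
      finally show ?thesis using target m1 by simp
    qed
  qed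
qed



lemma relu_diff: "\<bar>max (u::real) 0 - max v 0\<bar> \<le> \<bar>u - v\<bar>"
  by (auto simp: max_def)

lemma pair_bound:
  fixes A :: "'m::finite \<times> 'd::finite \<Rightarrow> real" and x1 x2 :: "'d \<Rightarrow> real"
  assumes c1: "x1 \<in> unit_cube" and c2: "x2 \<in> unit_cube" and card: "card {j. x1 j \<noteq> x2 j} \<le> 1"
  shows "\<exists>j. l1_norm (\<lambda>i. relu_layer A b x1 i - relu_layer A b x2 i) \<le> (\<Sum>i\<in>UNIV. \<bar>A (i,j)\<bar>)"
proof (cases "{j. x1 j \<noteq> x2 j} = {}")
  case True
  hence "x1 = x2" by auto
  hence "l1_norm (\<lambda>i. relu_layer A b x1 i - relu_layer A b x2 i) = 0" by (simp add: l1_norm_def)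
  moreover have "0 \<le> (\<Sum>i\<in>UNIV. \<bar>A (i,undefined)\<bar>)" by (simp add: sum_nonneg)
  ultimately show ?thesis by auto
next
  case False
  hence "card {j. x1 j \<noteq> x2 j} > 0" by (simp add: card_gt_0_iff)
  hence "card {j. x1 j \<noteq> x2 j} = 1" using card by linarith
  then obtain j0 where j0: "{j. x1 j \<noteq> x2 j} = {j0}" by (rule card_1_singletonE)
  have same: "j \<noteq> j0 \<Longrightarrow> x1 j = x2 j" for j using j0 by auto
  have "0 \<le> x1 j0" "x1 j0 \<le> 1" "0 \<le> x2 j0" "x2 j0 \<le> 1" using c1 c2 unfolding unit_cube_def by auto
  hence d1: "\<bar>x1 j0 - x2 j0\<bar> \<le> 1" by linarith
  have per: "\<bar>relu_layer A b x1 i - relu_layer A b x2 i\<bar> \<le> \<bar>A (i,j0)\<bar>" for i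
  proof -
    have "(\<Sum>j\<in>UNIV. A (i, j) * x1 j) - (\<Sum>j\<in>UNIV. A (i, j) * x2 j) = (\<Sum>j\<in>UNIV. A (i, j) * (x1 j - x2 j))"
      by (simp add: sum_subtractf right_diff_distrib)
    also have "\<dots> = (\<Sum>j\<in>UNIV. if j = j0 then A (i, j0) * (x1 j0 - x2 j0) else 0)"
      by (rule sum.cong) (auto simp: same)
    also have "\<dots> = A (i, j0) * (x1 j0 - x2 j0)" by simp
    finally have eq: "(\<Sum>j\<in>UNIV. A (i, j) * x1 j) + b i - ((\<Sum>j\<in>UNIV. A (i, j) * x2 j) + b i) = A (i, j0) * (x1 j0 - x2 j0)"
      by simp
    have "\<bar>relu_layer A b x1 i - relu_layer A b x2 i\<bar> \<le> \<bar>A (i, j0) * (x1 j0 - x2 j0)\<bar>"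
      unfolding relu_layer_def using relu_diff eq by metis
    also have "\<dots> = \<bar>A (i, j0)\<bar> * \<bar>x1 j0 - x2 j0\<bar>" by (simp add: abs_mult)
    also have "\<dots> \<le> \<bar>A (i, j0)\<bar> * 1" by (rule mult_left_mono[OF d1]) simp
    finally show ?thesis by simp
  qed
  have "l1_norm (\<lambda>i. relu_layer A b x1 i - relu_layer A b x2 i) \<le> (\<Sum>i\<in>UNIV. \<bar>A (i,j0)\<bar>)"
    unfolding l1_norm_def by (rule sum_mono) (rule per)
  thus ?thesis by blast
qed

definition GSset :: "('m::finite \<times> 'd::finite \<Rightarrow> real) \<Rightarrow> ('m \<Rightarrow> real) \<Rightarrow> real set" where
  "GSset A b = {l1_norm (\<lambda>i. relu_layer A b x1 i - relu_layer A b x2 i) | x1 x2.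
      x1 \<in> unit_cube \<and> x2 \<in> unit_cube \<and> card {j. x1 j \<noteq> x2 j} \<le> 1}"

lemma GS1_eq: "GS1 (relu_layer A b) = Sup (GSset A b)"
  unfolding GS1_def GSset_def ..

lemma GS_le_iff:
  fixes A :: "'m::finite \<times> 'd::finite \<Rightarrow> real"
  shows "GS1 (relu_layer A b) \<le> T \<longleftrightarrow>
    (\<forall>x1 x2. x1 \<in> unit_cube \<and> x2 \<in> unit_cube \<and> card {j. x1 j \<noteq> x2 j} \<le> 1 \<longrightarrow>
        l1_norm (\<lambda>i. relu_layer A b x1 i - relu_layer A b x2 i) \<le> T)"
proof -
  have ne: "GSset A b \<noteq> {}"
  proof -
    have z: "(\<lambda>_. 0::real) \<in> (unit_cube :: ('d \<Rightarrow> real) set)" by (simp add: unit_cube_def)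
    have "l1_norm (\<lambda>i. relu_layer A b (\<lambda>_. 0) i - relu_layer A b (\<lambda>_. 0) i) \<in> GSset A b"
      unfolding GSset_def using z by fastforce
    thus ?thesis by auto
  qed
  have bdd: "bdd_above (GSset A b)"
  proof (rule bdd_aboveI)
    fix y assume "y \<in> GSset A b"
    then obtain x1 x2 where y: "y = l1_norm (\<lambda>i. relu_layer A b x1 i - relu_layer A b x2 i)"
      and c: "x1 \<in> unit_cube" "x2 \<in> unit_cube" "card {j. x1 j \<noteq> x2 j} \<le> 1"
      unfolding GSset_def by auto
    obtain j where "y \<le> (\<Sum>i\<in>UNIV. \<bar>A (i,j)\<bar>)" using pair_bound[OF c, of A b] y by auto
    also have "\<dots> \<le> (\<Sum>j'\<in>UNIV. \<Sum>i\<in>UNIV. \<bar>A (i,j')\<bar>)"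
      by (rule member_le_sum[where f = "\<lambda>j'. \<Sum>i\<in>UNIV. \<bar>A (i,j')\<bar>"]) (auto intro: sum_nonneg)
    finally show "y \<le> (\<Sum>j'\<in>UNIV. \<Sum>i\<in>UNIV. \<bar>A (i,j')\<bar>)" .
  qed
  show ?thesis unfolding GS1_eq cSup_le_iff[OF ne bdd] unfolding GSset_def by blast
qed

lemma good_closed:
  fixes T :: real and b :: "'m::finite \<Rightarrow> real"
  shows "closed {A :: 'm \<times> 'd::finite \<Rightarrow> real. GS1 (relu_layer A b) \<le> T}"
proof -
  have cont: "continuous_on UNIV (\<lambda>A :: 'm \<times> 'd \<Rightarrow> real. l1_norm (\<lambda>i. relu_layer A b x1 i - relu_layer A b x2 i))"
    for x1 x2 :: "'d \<Rightarrow> real"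
    unfolding l1_norm_def relu_layer_def
    by (intro continuous_intros continuous_on_product_coordinates)
  show ?thesis unfolding GS_le_iff
    by (intro closed_Collect_all closed_Collect_imp closed_Collect_le cont continuous_on_const) auto
qed



theorem lemmaD2:
  fixes \<sigma> :: real and b :: "'m::finite \<Rightarrow> real" and \<delta> :: real
  assumes "\<sigma> > 0" and "0 < \<delta>" and "\<delta> < 1"
  shows "measure (gauss_matrix \<sigma> :: ('m \<times> 'd::finite \<Rightarrow> real) measure)
           {A \<in> space (gauss_matrix \<sigma>).
              GS1 (relu_layer A b) \<le> \<sigma> * real CARD('m)
                + 4 * \<sigma> * sqrt (real CARD('m)) * ln (real CARD('m) * real CARD('d) / \<delta>) powr (3/2)}
         \<ge> 1 - \<delta>"
proof -
  let ?G = "gauss_matrix \<sigma> :: ('m \<times> 'd \<Rightarrow> real) measure"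
  interpret P: prob_space ?G by (rule prob_gm[OF assms(1)])
  define T where "T = \<sigma> * real CARD('m)
                + 4 * \<sigma> * sqrt (real CARD('m)) * ln (real CARD('m) * real CARD('d) / \<delta>) powr (3/2)"
  define S where "S = (\<lambda>j (A :: 'm \<times> 'd \<Rightarrow> real). \<Sum>i\<in>UNIV. \<bar>A (i,j)\<bar>)"
  define Bad where "Bad = (\<lambda>j. {A \<in> space ?G. T \<le> S j A})"
  have Tpos: "T > 0"
  proof -
    have "0 < \<sigma> * real CARD('m)" using assms by simp
    moreover have "0 \<le> 4 * \<sigma> * sqrt (real CARD('m)) * ln (real CARD('m) * real CARD('d) / \<delta>) powr (3/2)"
      using assms by simp
    ultimately show ?thesis unfolding T_def by linarith
  qed
  have Smeas: "S j \<in> borel_measurable ?G" for j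
    unfolding S_def gauss_matrix_def by measurable
  have Bad_sets: "Bad j \<in> sets ?G" for j
  proof -
    have "Bad j = S j -` {T..} \<inter> space ?G" unfolding Bad_def by auto
    also have "\<dots> \<in> sets ?G" by (rule measurable_sets[OF Smeas]) (intro borel_closed closed_atLeast)
    finally show ?thesis .
  qed
  have Bad_bound: "P.prob (Bad j) \<le> \<delta> / real CARD('d)" for j
  proof -
    have H1: "P.prob (Bad j) \<le> (2 * exp (l^2 * \<sigma>^2 / 2) - 1 + l * (\<sigma> * sqrt (2 / pi))) ^ CARD('m) / exp (l * T)"
      if l0: "l \<ge> 0" for l
    proof -
      have M0: "0 \<le> 2 * exp (l^2 * \<sigma>^2 / 2) - 1 + l * (\<sigma> * sqrt (2 / pi))"
      proof -
        have "1 \<le> exp (l^2 * \<sigma>^2 / 2)" by simp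
        moreover have "0 \<le> l * (\<sigma> * sqrt (2 / pi))" using l0 assms by simp
        ultimately show ?thesis by linarith
      qed
      show ?thesis unfolding Bad_def
      proof (rule markov_g[where g = "\<lambda>x. exp (l * x)"])
        show "prob_space ?G" by (rule P.prob_space_axioms)
        show "S j \<in> borel_measurable ?G" by (rule Smeas)
        show "(\<lambda>x. exp (l * S j x)) \<in> borel_measurable ?G" using Smeas by measurable
        show "0 < exp (l * T)" by simp
        show "exp (l * T) \<le> exp (l * x)" if "T \<le> x" for x using that l0 by (simp add: mult_left_mono)
        show "0 \<le> exp (l * x)" for x by simp
        show "(\<integral>\<^sup>+x. ennreal (exp (l * S j x)) \<partial>?G)
            \<le> ennreal ((2 * exp (l^2 * \<sigma>^2 / 2) - 1 + l * (\<sigma> * sqrt (2 / pi))) ^ CARD('m))"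
          unfolding S_def by (rule col_mgf[OF assms(1) l0])
        show "0 \<le> (2 * exp (l^2 * \<sigma>^2 / 2) - 1 + l * (\<sigma> * sqrt (2 / pi))) ^ CARD('m)"
          using M0 by simp
      qed
    qed
    have H2: "P.prob (Bad j) \<le> real CARD('m) * (\<sigma> * sqrt (2 / pi)) / T"
    proof -
      have "P.prob (Bad j) \<le> real CARD('m) * (\<sigma> * sqrt (2 / pi)) / max T 0"
        unfolding Bad_def
      proof (rule markov_g[where g = "\<lambda>x. max x 0"])
        show "prob_space ?G" by (rule P.prob_space_axioms)
        show "S j \<in> borel_measurable ?G" by (rule Smeas)
        show "(\<lambda>x. max (S j x) 0) \<in> borel_measurable ?G" using Smeas by measurable
        show "0 < max T 0" using Tpos by simp
        show "max T 0 \<le> max x 0" if "T \<le> x" for x using that by simp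
        show "0 \<le> max x 0" for x :: real by simp
        have "(\<integral>\<^sup>+x. ennreal (max (S j x) 0) \<partial>?G) = (\<integral>\<^sup>+x. ennreal (S j x) \<partial>?G)"
        proof (rule nn_integral_cong)
          fix x :: "'m \<times> 'd \<Rightarrow> real"
          have "0 \<le> S j x" unfolding S_def by (rule sum_nonneg) simp
          thus "ennreal (max (S j x) 0) = ennreal (S j x)" by (simp add: max_absorb1)
        qed
        also have "\<dots> = ennreal (real CARD('m) * (\<sigma> * sqrt (2 / pi)))"
          unfolding S_def by (rule col_mean[OF assms(1)])
        finally show "(\<integral>\<^sup>+x. ennreal (max (S j x) 0) \<partial>?G) \<le> ennreal (real CARD('m) * (\<sigma> * sqrt (2 / pi)))"
          by simp
        show "0 \<le> real CARD('m) * (\<sigma> * sqrt (2 / pi))" using assms by simp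
      qed
      thus ?thesis using Tpos by simp
    qed
    show ?thesis
    proof (rule tail_core[where m = "CARD('m)" and d = "CARD('d)" and \<sigma> = \<sigma>])
      show "1 \<le> CARD('m)" "1 \<le> CARD('d)" by (simp_all add: Suc_leI)
      show "0 < \<sigma>" "0 < \<delta>" "\<delta> < 1" using assms by auto
      show "P.prob (Bad j) \<le> (2 * exp (l^2 * \<sigma>^2 / 2) - 1 + l * (\<sigma> * sqrt (2 / pi))) ^ CARD('m)
               / exp (l * (\<sigma> * real CARD('m) + 4 * \<sigma> * sqrt (real CARD('m)) * ln (real CARD('m) * real CARD('d) / \<delta>) powr (3/2)))"
        if "l \<ge> 0" for l using H1[OF that] unfolding T_def .
      show "P.prob (Bad j) \<le> real CARD('m) * (\<sigma> * sqrt (2 / pi)) / (\<sigma> * real CARD('m) + 4 * \<sigma> * sqrt (real CARD('m)) * ln (real CARD('m) * real CARD('d) / \<delta>) powr (3/2))"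
        using H2 unfolding T_def .
    qed
  qed
  define Good where "Good = {A \<in> space ?G. GS1 (relu_layer A b) \<le> T}"
  have Good_sets: "Good \<in> sets ?G"
  proof -
    have "Good = {A :: 'm \<times> 'd \<Rightarrow> real. GS1 (relu_layer A b) \<le> T}" unfolding Good_def by (simp add: space_gm)
    also have "\<dots> \<in> sets ?G" unfolding sets_gm by (intro borel_closed good_closed)
    finally show ?thesis .
  qed
  have sub: "space ?G - Good \<subseteq> (\<Union>j\<in>UNIV. Bad j)"
  proof
    fix A assume A: "A \<in> space ?G - Good"
    hence "\<not> GS1 (relu_layer A b) \<le> T" unfolding Good_def by auto
    then obtain x1 x2 where c: "x1 \<in> unit_cube" "x2 \<in> unit_cube" "card {j. x1 j \<noteq> x2 j} \<le> 1"
      and gt: "\<not> l1_norm (\<lambda>i. relu_layer A b x1 i - relu_layer A b x2 i) \<le> T"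
      unfolding GS_le_iff by blast
    obtain j where "l1_norm (\<lambda>i. relu_layer A b x1 i - relu_layer A b x2 i) \<le> S j A"
      using pair_bound[OF c, of A b] unfolding S_def by blast
    hence "T \<le> S j A" using gt by linarith
    thus "A \<in> (\<Union>j\<in>UNIV. Bad j)" using A unfolding Bad_def by auto
  qed
  have "P.prob (space ?G - Good) \<le> P.prob (\<Union>j\<in>UNIV. Bad j)"
    by (rule P.finite_measure_mono[OF sub]) (auto intro: Bad_sets)
  also have "\<dots> \<le> (\<Sum>j\<in>UNIV. P.prob (Bad j))"
    by (rule measure_UNION_le) (auto intro: Bad_sets)
  also have "\<dots> \<le> (\<Sum>j\<in>(UNIV::'d set). \<delta> / real CARD('d))"
    by (rule sum_mono) (rule Bad_bound)
  also have "\<dots> = \<delta>" by simp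
  finally have "P.prob (space ?G - Good) \<le> \<delta>" .
  hence "1 - P.prob Good \<le> \<delta>" using P.prob_compl[OF Good_sets] by simp
  hence "1 - \<delta> \<le> P.prob Good" by simp
  thus ?thesis unfolding Good_def T_def .
qed

end
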